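(* Let $X$ be a complex separable Fréchet space and $T$ an invertible continuous linear operator on $X$ with discrete spectrum, i.e. $\overline{\mathrm{span}(\mathcal{E}(T))}=X$ where $\mathcal{E}(T)=\{x\in X:Tx=\lambda x\text{ for some }\lambda\in\mathbb{T}\}$. Then $T$ is hyper-recurrent and $\mathrm{Hr}(T)$ is dense in $X$.
   Context: $\mathbb{T}$ is the unit circle in $\mathbb{C}$. For a continuous linear operator $T$ on a Fréchet space $X$: $x$ is recurrent if $T^{\omega_n}x\to x$ for some strictly increasing sequence $(\omega_n)$ of positive integers; $\mathrm{Rec}(T)$ is the set of recurrent vectors and $T$ is recurrent if $\mathrm{Rec}(T)$ is dense. $\mathfrak{C}$ is the set of strictly increasing sequences $\omega$ with $T^{\omega_n}x\to x$ for some $x\ne0$; $\mathfrak{L}(\omega)=\{x:T^{\omega_n}x\to x\}$. $\mathrm{Hr}(T)$ is the set of $x\in\mathrm{Rec}(T)$ such that $\mathfrak{L}(\omega)$ is dense for every $\omega\in\mathfrak{C}$ with $x\in\mathfrak{L}(\omega)$; a recurrent $T$ is hyper-recurrent if $\mathrm{Hr}(T)\ne\emptyset$. *)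

theory Defs
  imports "HOL-Analysis.Analysis"
begin

text \<open>A complex Frechet space is modelled as a type 'a with an additive group
structure, a complex scalar multiplication sc making it a complex vector space
(library locale vector_space), and a countable family of seminorms p :: nat => 'a => real
which is separating and complete. The topology is the locally convex topology
generated by the seminorms (basic neighbourhoods of x: finitely many seminorms
less than delta).\<close>

definition cseminorm :: "(complex \<Rightarrow> 'a::ab_group_add \<Rightarrow> 'a) \<Rightarrow> ('a \<Rightarrow> real) \<Rightarrow> bool" where
  "cseminorm sc q \<longleftrightarrow> (\<forall>x y. q (x + y) \<le> q x + q y) \<and> (\<forall>c x. q (sc c x) = cmod c * q x)"

definition sn_conv :: "(nat \<Rightarrow> 'a::ab_group_add \<Rightarrow> real) \<Rightarrow> (nat \<Rightarrow> 'a) \<Rightarrow> 'a \<Rightarrow> bool" where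
  "sn_conv p s x \<longleftrightarrow> (\<forall>k. (\<lambda>n. p k (s n - x)) \<longlonglongrightarrow> 0)"

definition sn_cauchy :: "(nat \<Rightarrow> 'a::ab_group_add \<Rightarrow> real) \<Rightarrow> (nat \<Rightarrow> 'a) \<Rightarrow> bool" where
  "sn_cauchy p s \<longleftrightarrow> (\<forall>k. \<forall>e>0. \<exists>N. \<forall>m\<ge>N. \<forall>n\<ge>N. p k (s m - s n) < e)"

definition sn_closure :: "(nat \<Rightarrow> 'a::ab_group_add \<Rightarrow> real) \<Rightarrow> 'a set \<Rightarrow> 'a set" where
  "sn_closure p S = {x. \<forall>K e. finite K \<and> e > 0 \<longrightarrow> (\<exists>y\<in>S. \<forall>k\<in>K. p k (y - x) < e)}"

definition sn_dense :: "(nat \<Rightarrow> 'a::ab_group_add \<Rightarrow> real) \<Rightarrow> 'a set \<Rightarrow> bool" where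
  "sn_dense p S \<longleftrightarrow> sn_closure p S = UNIV"

definition sn_continuous :: "(nat \<Rightarrow> 'a::ab_group_add \<Rightarrow> real) \<Rightarrow> ('a \<Rightarrow> 'a) \<Rightarrow> bool" where
  "sn_continuous p f \<longleftrightarrow> (\<forall>x k e. e > 0 \<longrightarrow>
      (\<exists>K d. finite K \<and> d > 0 \<and> (\<forall>y. (\<forall>j\<in>K. p j (y - x) < d) \<longrightarrow> p k (f y - f x) < e)))"

definition complex_frechet :: "(complex \<Rightarrow> 'a::ab_group_add \<Rightarrow> 'a) \<Rightarrow> (nat \<Rightarrow> 'a \<Rightarrow> real) \<Rightarrow> bool" where
  "complex_frechet sc p \<longleftrightarrow> vector_space sc \<and> (\<forall>k. cseminorm sc (p k))
     \<and> (\<forall>x. (\<forall>k. p k x = 0) \<longrightarrow> x = 0)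
     \<and> (\<forall>s. sn_cauchy p s \<longrightarrow> (\<exists>x. sn_conv p s x))"

definition sn_separable :: "(nat \<Rightarrow> 'a::ab_group_add \<Rightarrow> real) \<Rightarrow> bool" where
  "sn_separable p \<longleftrightarrow> (\<exists>D. countable D \<and> sn_dense p D)"

definition unimod_eigvecs :: "(complex \<Rightarrow> 'a \<Rightarrow> 'a) \<Rightarrow> ('a \<Rightarrow> 'a) \<Rightarrow> 'a set" where
  "unimod_eigvecs sc T = {x. \<exists>c. cmod c = 1 \<and> T x = sc c x}"

definition rec_seq :: "(nat \<Rightarrow> 'a::ab_group_add \<Rightarrow> real) \<Rightarrow> ('a \<Rightarrow> 'a) \<Rightarrow> (nat \<Rightarrow> nat) \<Rightarrow> 'a \<Rightarrow> bool" where
  "rec_seq p T \<omega> x \<longleftrightarrow> sn_conv p (\<lambda>n. (T ^^ \<omega> n) x) x"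

definition admissible_seq :: "(nat \<Rightarrow> nat) \<Rightarrow> bool" where
  "admissible_seq \<omega> \<longleftrightarrow> strict_mono \<omega> \<and> (\<forall>n. 0 < \<omega> n)"

definition Rec :: "(nat \<Rightarrow> 'a::ab_group_add \<Rightarrow> real) \<Rightarrow> ('a \<Rightarrow> 'a) \<Rightarrow> 'a set" where
  "Rec p T = {x. \<exists>\<omega>. admissible_seq \<omega> \<and> rec_seq p T \<omega> x}"

definition recurrent_op :: "(nat \<Rightarrow> 'a::ab_group_add \<Rightarrow> real) \<Rightarrow> ('a \<Rightarrow> 'a) \<Rightarrow> bool" where
  "recurrent_op p T \<longleftrightarrow> sn_dense p (Rec p T)"

definition Cseqs :: "(nat \<Rightarrow> 'a::ab_group_add \<Rightarrow> real) \<Rightarrow> ('a \<Rightarrow> 'a) \<Rightarrow> (nat \<Rightarrow> nat) set" where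
  "Cseqs p T = {\<omega>. admissible_seq \<omega> \<and> (\<exists>x. x \<noteq> 0 \<and> rec_seq p T \<omega> x)}"

definition Lset :: "(nat \<Rightarrow> 'a::ab_group_add \<Rightarrow> real) \<Rightarrow> ('a \<Rightarrow> 'a) \<Rightarrow> (nat \<Rightarrow> nat) \<Rightarrow> 'a set" where
  "Lset p T \<omega> = {x. rec_seq p T \<omega> x}"

definition Hr :: "(nat \<Rightarrow> 'a::ab_group_add \<Rightarrow> real) \<Rightarrow> ('a \<Rightarrow> 'a) \<Rightarrow> 'a set" where
  "Hr p T = {x \<in> Rec p T. \<forall>\<omega>\<in>Cseqs p T. x \<in> Lset p T \<omega> \<longrightarrow> sn_dense p (Lset p T \<omega>)}"

definition hyper_recurrent :: "(nat \<Rightarrow> 'a::ab_group_add \<Rightarrow> real) \<Rightarrow> ('a \<Rightarrow> 'a) \<Rightarrow> bool" where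
  "hyper_recurrent p T \<longleftrightarrow> recurrent_op p T \<and> Hr p T \<noteq> {}"

end

theory Submission
  imports Defs
begin

locale fr = vector_space sc for sc :: "complex \<Rightarrow> 'a::ab_group_add \<Rightarrow> 'a" +
  fixes p :: "nat \<Rightarrow> 'a \<Rightarrow> real" and T :: "'a \<Rightarrow> 'a"
  assumes semi: "\<And>k. cseminorm sc (p k)"
    and sep: "\<And>x. (\<forall>k. p k x = 0) \<Longrightarrow> x = 0"
    and compl: "\<And>s. sn_cauchy p s \<Longrightarrow> \<exists>x. sn_conv p s x"
    and lin: "Vector_Spaces.linear sc sc T"
    and cont: "sn_continuous p T"
begin

lemma p_add: "p k (x + y) \<le> p k x + p k y"
  using semi[of k] unfolding cseminorm_def by blast

lemma p_scale: "p k (sc c x) = cmod c * p k x"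
  using semi[of k] unfolding cseminorm_def by blast

lemma p_zero[simp]: "p k 0 = 0"
  using p_scale[of k 0 0] by simp

lemma p_minus: "p k (- x) = p k x"
  using p_scale[of k "-1" x] by simp

lemma p_nonneg: "p k x \<ge> 0"
  using p_add[of k x "-x"] p_minus[of k x] by simp

lemma p_commute: "p k (x - y) = p k (y - x)"
  using p_minus[of k "x - y"] by simp

lemma p_diff_tri: "p k (x - z) \<le> p k (x - y) + p k (y - z)"
  using p_add[of k "x - y" "y - z"] by simp

lemma p_rev: "\<bar>p k x - p k y\<bar> \<le> p k (x - y)"
  using p_add[of k "x - y" y] p_add[of k "y - x" x] p_commute[of k x y] by auto

lemma p_sum: "p k (sum f A) \<le> (\<Sum>i\<in>A. p k (f i))"
  proof (induction A rule: infinite_finite_induct)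
  case (insert i A)
  have "p k (f i + sum f A) \<le> p k (f i) + p k (sum f A)" by (rule p_add)
  also have "\<dots> \<le> p k (f i) + (\<Sum>i\<in>A. p k (f i))" using insert.IH by simp
  finally show ?case using insert.hyps by simp
qed auto

lemma nn_squeeze:
  fixes f g :: "nat \<Rightarrow> real"
  assumes "\<And>n. 0 \<le> f n" "\<And>n. f n \<le> g n" "g \<longlonglongrightarrow> 0"
  shows "f \<longlonglongrightarrow> 0"
  by (rule tendsto_sandwich[of "\<lambda>_. 0" f sequentially g 0]) (use assms in auto)

lemma conv_iff0: "sn_conv p s x \<longleftrightarrow> sn_conv p (\<lambda>n. s n - x) 0"
  unfolding sn_conv_def by simp

lemma conv_le:
  assumes "sn_conv p s x" "\<And>k n. p k (u n - y) \<le> C k * p k (s n - x)"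
  shows "sn_conv p u y"
  unfolding sn_conv_def
proof
  fix k
  have "(\<lambda>n. p k (s n - x)) \<longlonglongrightarrow> 0"
    using assms(1) unfolding sn_conv_def by blast
  then have "(\<lambda>n. C k * p k (s n - x)) \<longlonglongrightarrow> 0"
    by (rule tendsto_mult_right_zero)
  then show "(\<lambda>n. p k (u n - y)) \<longlonglongrightarrow> 0"
    by (rule nn_squeeze[OF p_nonneg assms(2)])
qed

lemma conv_const: "sn_conv p (\<lambda>n. x) x"
  by (simp add: sn_conv_def)

lemma conv_add:
  assumes "sn_conv p s x" "sn_conv p t y"
  shows "sn_conv p (\<lambda>n. s n + t n) (x + y)"
  unfolding sn_conv_def
proof
  fix k
  have "(\<lambda>n. p k (s n - x) + p k (t n - y)) \<longlonglongrightarrow> 0 + 0"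
    using assms unfolding sn_conv_def by (intro tendsto_add) blast+
  then have "(\<lambda>n. p k (s n - x) + p k (t n - y)) \<longlonglongrightarrow> 0" by simp
  moreover have "p k (s n + t n - (x + y)) \<le> p k (s n - x) + p k (t n - y)" for n
    using p_add[of k "s n - x" "t n - y"] by (simp add: algebra_simps)
  ultimately show "(\<lambda>n. p k (s n + t n - (x + y))) \<longlonglongrightarrow> 0"
    by (intro nn_squeeze[OF p_nonneg]) auto
qed

lemma conv_scale:
  assumes "sn_conv p s x"
  shows "sn_conv p (\<lambda>n. sc c (s n)) (sc c x)"
  by (rule conv_le[OF assms, of _ _ "\<lambda>_. cmod c"]) (simp add: p_scale flip: scale_right_diff_distrib)

lemma conv_minus:
  assumes "sn_conv p s x"
  shows "sn_conv p (\<lambda>n. - s n) (- x)"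
  by (rule conv_le[OF assms, of _ _ "\<lambda>_. 1"]) (metis minus_diff_eq minus_diff_minus mult_1 p_minus order_refl)

lemma conv_diff:
  assumes "sn_conv p s x" "sn_conv p t y"
  shows "sn_conv p (\<lambda>n. s n - t n) (x - y)"
  using conv_add[OF assms(1) conv_minus[OF assms(2)]] by simp

lemma conv_unique:
  assumes "sn_conv p s x" "sn_conv p s y"
  shows "x = y"
proof -
  have "p k (x - y) = 0" for k
  proof -
    have "(\<lambda>n. p k (s n - y) + p k (s n - x)) \<longlonglongrightarrow> 0 + 0"
      using assms unfolding sn_conv_def by (intro tendsto_add) blast+
    moreover have "p k (x - y) \<le> p k (s n - y) + p k (s n - x)" for n
      using p_diff_tri[where k=k and x=x and y="s n" and z=y] p_commute[of k x "s n"] by simp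
    ultimately have "p k (x - y) \<le> 0"
      by (intro tendsto_le[OF _ _ tendsto_const]) auto
    then show ?thesis using p_nonneg[of k "x - y"] by simp
  qed
  then have "x - y = 0" by (intro sep) auto
  then show ?thesis by simp
qed

lemma conv_p:
  assumes "sn_conv p s x"
  shows "(\<lambda>n. p k (s n)) \<longlonglongrightarrow> p k x"
proof -
  have "(\<lambda>n. p k (s n - x)) \<longlonglongrightarrow> 0" using assms unfolding sn_conv_def by auto
  then have "(\<lambda>n. p k (s n) - p k x) \<longlonglongrightarrow> 0"
    by (rule Lim_null_comparison[OF always_eventually, rotated]) (simp add: p_rev)
  then show ?thesis by (rule LIM_zero_cancel)
qed

lemma cont_seq:
  assumes f: "sn_continuous p f" and s: "sn_conv p s x"
  shows "sn_conv p (\<lambda>n. f (s n)) (f x)"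
  unfolding sn_conv_def
proof (intro allI)
  fix k
  show "(\<lambda>n. p k (f (s n) - f x)) \<longlonglongrightarrow> 0"
  proof (rule order_tendstoI)
    fix a :: real assume "a < 0"
    then show "\<forall>\<^sub>F n in sequentially. a < p k (f (s n) - f x)"
      by (intro always_eventually allI) (meson le_less_trans not_le p_nonneg)
  next
    fix r :: real assume "0 < r"
    obtain K d where K: "finite K" "d > 0" "\<And>y. (\<forall>j\<in>K. p j (y - x) < d) \<Longrightarrow> p k (f y - f x) < r"
      using f \<open>0 < r\<close> unfolding sn_continuous_def by meson
    have "\<forall>\<^sub>F n in sequentially. \<forall>j\<in>K. p j (s n - x) < d"
      using K(1)
    proof (intro eventually_ball_finite ballI)
      fix j assume "j \<in> K"
      have "(\<lambda>n. p j (s n - x)) \<longlonglongrightarrow> 0" using s unfolding sn_conv_def by auto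
      then show "\<forall>\<^sub>F n in sequentially. p j (s n - x) < d"
        using \<open>d > 0\<close> by (rule order_tendstoD)
    qed
    then show "\<forall>\<^sub>F n in sequentially. p k (f (s n) - f x) < r"
      by (rule eventually_mono) (rule K(3))
  qed
qed


lemma T_add: "T (x + y) = T x + T y"
  using lin unfolding Vector_Spaces.linear_iff by blast

lemma T_scale: "T (sc c x) = sc c (T x)"
  using lin unfolding Vector_Spaces.linear_iff by blast

lemma Tn_add: "(T ^^ n) (x + y) = (T ^^ n) x + (T ^^ n) y"
  by (induction n) (simp_all add: T_add)

lemma Tn_scale: "(T ^^ n) (sc c x) = sc c ((T ^^ n) x)"
  by (induction n) (simp_all add: T_scale)

lemma Tn_zero[simp]: "(T ^^ n) 0 = 0"
  using Tn_scale[of n 0 0] by simp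

lemma Tn_minus: "(T ^^ n) (- x) = - (T ^^ n) x"
  using Tn_scale[of n "-1" x] by simp

lemma Tn_diff: "(T ^^ n) (x - y) = (T ^^ n) x - (T ^^ n) y"
  using Tn_add[of n x "- y"] Tn_minus[of n y] by simp

lemma Tn_sum: "(T ^^ n) (sum f A) = (\<Sum>i\<in>A. (T ^^ n) (f i))"
  by (induction A rule: infinite_finite_induct) (simp_all add: Tn_add)

lemma Tn_cont: "sn_conv p s x \<Longrightarrow> sn_conv p (\<lambda>j. (T ^^ n) (s j)) ((T ^^ n) x)"
proof (induction n)
  case 0 then show ?case by simp
next
  case (Suc n)
  then show ?case using cont_seq[OF cont Suc.IH[OF Suc.prems]] by simp
qed

lemma Lset_subspace: "subspace (Lset p T \<omega>)"
proof (rule subspaceI)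
  show "0 \<in> Lset p T \<omega>" by (simp add: Lset_def rec_seq_def conv_const)
next
  fix x y assume "x \<in> Lset p T \<omega>" "y \<in> Lset p T \<omega>"
  then show "x + y \<in> Lset p T \<omega>"
    unfolding Lset_def rec_seq_def by (simp add: Tn_add conv_add)
next
  fix c x assume "x \<in> Lset p T \<omega>"
  then show "sc c x \<in> Lset p T \<omega>"
    unfolding Lset_def rec_seq_def by (simp add: Tn_scale conv_scale)
qed

end

locale fr_e = fr +
  fixes e :: "nat \<Rightarrow> 'a" and lam :: "nat \<Rightarrow> complex"
  assumes eig: "\<And>k. T (e k) = sc (lam k) (e k)"
    and unim: "\<And>k. cmod (lam k) = 1"
    and nz: "\<And>k. e k \<noteq> 0"
    and dspan: "sn_closure p (span (range e)) = UNIV"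
begin

lemma Tn_e: "(T ^^ n) (e k) = sc (lam k ^ n) (e k)"
  by (induction n) (simp_all add: eig T_scale mult.commute)

definition abssum :: "(nat \<Rightarrow> complex) \<Rightarrow> bool" where
  "abssum d \<longleftrightarrow> (\<forall>m. summable (\<lambda>k. cmod (d k) * p m (e k)))"

definition psum :: "(nat \<Rightarrow> complex) \<Rightarrow> nat \<Rightarrow> 'a" where
  "psum d N = (\<Sum>k<N. sc (d k) (e k))"

definition ser :: "(nat \<Rightarrow> complex) \<Rightarrow> 'a" where
  "ser d = (SOME x. sn_conv p (psum d) x)"

lemma psum_diff_le:
  "p m (psum d a - psum d b) \<le> \<bar>(\<Sum>k<a. cmod (d k) * p m (e k)) - (\<Sum>k<b. cmod (d k) * p m (e k))\<bar>"
proof -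
  have main: "p m (psum d a - psum d b) \<le> (\<Sum>k<a. cmod (d k) * p m (e k)) - (\<Sum>k<b. cmod (d k) * p m (e k))"
    if "b \<le> a" for a b
  proof -
    have "psum d a = psum d b + (\<Sum>k\<in>{b..<a}. sc (d k) (e k))"
      unfolding psum_def using sum.atLeastLessThan_concat[of 0 b a "\<lambda>k. sc (d k) (e k)"] that
      by (simp add: atLeast0LessThan)
    then have "p m (psum d a - psum d b) = p m (\<Sum>k\<in>{b..<a}. sc (d k) (e k))" by simp
    also have "\<dots> \<le> (\<Sum>k\<in>{b..<a}. cmod (d k) * p m (e k))"
      by (rule order_trans[OF p_sum]) (simp add: p_scale)
    also have "\<dots> = (\<Sum>k<a. cmod (d k) * p m (e k)) - (\<Sum>k<b. cmod (d k) * p m (e k))"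
      using sum.atLeastLessThan_concat[of 0 b a "\<lambda>k. cmod (d k) * p m (e k)"] that
      by (simp add: atLeast0LessThan)
    finally show ?thesis .
  qed
  show ?thesis
  proof (cases "b \<le> a")
    case True then show ?thesis using main[OF True] by linarith
  next
    case False
    then have "p m (psum d b - psum d a) \<le> (\<Sum>k<b. cmod (d k) * p m (e k)) - (\<Sum>k<a. cmod (d k) * p m (e k))"
      by (intro main) simp
    then show ?thesis by (simp add: p_commute[of m "psum d a"])
  qed
qed

lemma ser_conv:
  assumes "abssum d"
  shows "sn_conv p (psum d) (ser d)"
proof -
  have "sn_cauchy p (psum d)"
    unfolding sn_cauchy_def
  proof (intro allI impI)
    fix m and r :: real assume "r > 0"
    have "summable (\<lambda>k. cmod (d k) * p m (e k))" using assms unfolding abssum_def by blast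
    then have "convergent (\<lambda>N. \<Sum>k<N. cmod (d k) * p m (e k))"
      by (simp add: summable_iff_convergent)
    then have "Cauchy (\<lambda>N. \<Sum>k<N. cmod (d k) * p m (e k))"
      by (rule convergent_Cauchy)
    then obtain N where N: "\<And>a b. a \<ge> N \<Longrightarrow> b \<ge> N \<Longrightarrow>
        dist (\<Sum>k<a. cmod (d k) * p m (e k)) (\<Sum>k<b. cmod (d k) * p m (e k)) < r"
      using metric_CauchyD[OF _ \<open>r > 0\<close>] by blast
    have "p m (psum d a - psum d b) < r" if "a \<ge> N" "b \<ge> N" for a b
      using psum_diff_le[of m d a b] N[OF that] unfolding dist_real_def by linarith
    then show "\<exists>N. \<forall>a\<ge>N. \<forall>b\<ge>N. p m (psum d a - psum d b) < r" by blast
  qed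
  then obtain x where "sn_conv p (psum d) x" using compl by blast
  then show ?thesis unfolding ser_def by (rule someI)
qed

lemma ser_unique:
  assumes "abssum d" "sn_conv p (psum d) x"
  shows "ser d = x"
  using conv_unique[OF ser_conv[OF assms(1)] assms(2)] .

lemma ser_bound:
  assumes "abssum d"
  shows "p m (ser d) \<le> (\<Sum>k. cmod (d k) * p m (e k))"
proof -
  have s: "summable (\<lambda>k. cmod (d k) * p m (e k))" using assms unfolding abssum_def by blast
  have "p m (psum d N) \<le> (\<Sum>k. cmod (d k) * p m (e k))" for N
  proof -
    have "p m (psum d N) \<le> (\<Sum>k<N. cmod (d k) * p m (e k))"
      unfolding psum_def by (rule order_trans[OF p_sum]) (simp add: p_scale)
    also have "\<dots> \<le> (\<Sum>k. cmod (d k) * p m (e k))"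
      by (rule sum_le_suminf[OF s]) (auto simp: p_nonneg)
    finally show ?thesis .
  qed
  then show ?thesis
    by (intro LIMSEQ_le_const2[OF conv_p[OF ser_conv[OF assms]]]) auto
qed

lemma abssum_le:
  assumes "abssum d" "\<And>k. cmod (b k) \<le> B * cmod (d k)"
  shows "abssum b"
  unfolding abssum_def
proof
  fix m
  have "summable (\<lambda>k. B * (cmod (d k) * p m (e k)))"
    using assms(1) unfolding abssum_def by (intro summable_mult) blast
  then show "summable (\<lambda>k. cmod (b k) * p m (e k))"
  proof (rule summable_comparison_test')
    fix k
    have "cmod (b k) * p m (e k) \<le> B * cmod (d k) * p m (e k)"
      by (rule mult_right_mono[OF assms(2) p_nonneg])
    then show "norm (cmod (b k) * p m (e k)) \<le> B * (cmod (d k) * p m (e k))"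
      by (simp add: p_nonneg)
  qed
qed

lemma abssum_add:
  assumes "abssum d1" "abssum d2"
  shows "abssum (\<lambda>k. d1 k + d2 k)"
  unfolding abssum_def
proof
  fix m
  have "summable (\<lambda>k. cmod (d1 k) * p m (e k) + cmod (d2 k) * p m (e k))"
    using assms unfolding abssum_def by (intro summable_add) blast+
  then show "summable (\<lambda>k. cmod (d1 k + d2 k) * p m (e k))"
  proof (rule summable_comparison_test')
    fix k
    have "cmod (d1 k + d2 k) * p m (e k) \<le> (cmod (d1 k) + cmod (d2 k)) * p m (e k)"
      by (rule mult_right_mono[OF norm_triangle_ineq p_nonneg])
    then show "norm (cmod (d1 k + d2 k) * p m (e k)) \<le> cmod (d1 k) * p m (e k) + cmod (d2 k) * p m (e k)"
      by (simp add: p_nonneg algebra_simps)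
  qed
qed

lemma abssum_scale: "abssum d \<Longrightarrow> abssum (\<lambda>k. c * d k)"
  by (rule abssum_le[of d _ "cmod c"]) (simp_all add: norm_mult)

lemma ser_add:
  assumes "abssum d1" "abssum d2"
  shows "ser (\<lambda>k. d1 k + d2 k) = ser d1 + ser d2"
proof (rule ser_unique[OF abssum_add[OF assms]])
  have "psum (\<lambda>k. d1 k + d2 k) = (\<lambda>N. psum d1 N + psum d2 N)"
    unfolding psum_def by (simp add: scale_left_distrib sum.distrib)
  then show "sn_conv p (psum (\<lambda>k. d1 k + d2 k)) (ser d1 + ser d2)"
    using conv_add[OF ser_conv[OF assms(1)] ser_conv[OF assms(2)]] by simp
qed

lemma ser_scale:
  assumes "abssum d"
  shows "ser (\<lambda>k. c * d k) = sc c (ser d)"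
proof (rule ser_unique[OF abssum_scale[OF assms]])
  have "psum (\<lambda>k. c * d k) = (\<lambda>N. sc c (psum d N))"
    unfolding psum_def by (simp add: scale_sum_right)
  then show "sn_conv p (psum (\<lambda>k. c * d k)) (sc c (ser d))"
    using conv_scale[OF ser_conv[OF assms]] by simp
qed

lemma ser_fin:
  assumes "\<And>k. k \<ge> N \<Longrightarrow> d k = 0"
  shows "abssum d" and "ser d = psum d N"
proof -
  show ad: "abssum d"
    unfolding abssum_def
  proof
    fix m
    show "summable (\<lambda>k. cmod (d k) * p m (e k))"
      by (rule summable_comparison_test'[of "\<lambda>_. 0" N]) (simp_all add: assms)
  qed
  have fin: "psum d n = psum d N" if "n \<ge> N" for n
  proof -
    have "psum d n = psum d N + (\<Sum>k\<in>{N..<n}. sc (d k) (e k))"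
      unfolding psum_def using sum.atLeastLessThan_concat[of 0 N n "\<lambda>k. sc (d k) (e k)"] that
      by (simp add: atLeast0LessThan)
    moreover have "(\<Sum>k\<in>{N..<n}. sc (d k) (e k)) = 0"
      by (rule sum.neutral) (simp add: assms)
    ultimately show ?thesis by (metis add.right_neutral)
  qed
  have "sn_conv p (psum d) (psum d N)"
    unfolding sn_conv_def
  proof
    fix m
    have "eventually (\<lambda>n. p m (psum d n - psum d N) = 0) sequentially"
      using eventually_ge_at_top[of N]
    proof (rule eventually_mono)
      fix n assume "N \<le> n"
      then have "psum d n - psum d N = 0" using fin[of n] by simp
      then show "p m (psum d n - psum d N) = 0" by simp
    qed
    then show "(\<lambda>n. p m (psum d n - psum d N)) \<longlonglongrightarrow> 0"
      by (rule tendsto_eventually)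
  qed
  then show "ser d = psum d N" by (rule ser_unique[OF ad])
qed

lemma ser_Tn:
  assumes "abssum d"
  shows "(T ^^ n) (ser d) = ser (\<lambda>k. lam k ^ n * d k)"
proof -
  have ab: "abssum (\<lambda>k. lam k ^ n * d k)"
    by (rule abssum_le[OF assms, of _ 1]) (simp add: norm_mult norm_power unim)
  have "(T ^^ n) (psum d N) = psum (\<lambda>k. lam k ^ n * d k) N" for N
    unfolding psum_def Tn_sum Tn_scale Tn_e scale_scale by (simp only: mult.commute)
  then have "sn_conv p (psum (\<lambda>k. lam k ^ n * d k)) ((T ^^ n) (ser d))"
    using Tn_cont[OF ser_conv[OF assms], of n] by simp
  then show ?thesis
    by (rule ser_unique[OF ab, symmetric])
qed


lemma ser_null:
  assumes ad: "abssum d" and lim: "\<And>k. (\<lambda>n. f n k) \<longlonglongrightarrow> 0"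
    and bd: "\<And>n k. cmod (f n k) \<le> B"
  shows "sn_conv p (\<lambda>n. ser (\<lambda>k. f n k * d k)) 0"
  unfolding sn_conv_def
proof
  fix m
  have ab: "abssum (\<lambda>k. f n k * d k)" for n
    by (rule abssum_le[OF ad, of _ B]) (simp add: norm_mult mult_right_mono[OF bd])
  define a where "a k n = cmod (f n k) * (cmod (d k) * p m (e k))" for k n
  have sm: "summable (\<lambda>k. cmod (d k) * p m (e k))" using ad unfolding abssum_def by blast
  have "(\<lambda>n. suminf (\<lambda>k. a k n)) \<longlonglongrightarrow> suminf (\<lambda>k. 0::real)"
  proof (rule conjunct2[OF conjunct2[OF tannerys_theorem[where M="\<lambda>k. B * (cmod (d k) * p m (e k))"]]])
    fix k
    have "(\<lambda>n. cmod (f n k)) \<longlonglongrightarrow> 0" using lim[of k] by (rule tendsto_norm_zero)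
    then show "(\<lambda>n. a k n) \<longlonglongrightarrow> 0"
      unfolding a_def by (rule tendsto_mult_left_zero)
  next
    have "norm (a k n) \<le> B * (cmod (d k) * p m (e k))" for k n
      unfolding a_def using mult_right_mono[OF bd[of n k], of "cmod (d k) * p m (e k)"]
      by (simp add: p_nonneg)
    then show "\<forall>\<^sub>F (k, n) in sequentially \<times>\<^sub>F sequentially. norm (a k n) \<le> B * (cmod (d k) * p m (e k))"
      by (intro always_eventually) auto
  next
    show "summable (\<lambda>k. B * (cmod (d k) * p m (e k)))" using sm by (rule summable_mult)
  qed simp
  then have lim0: "(\<lambda>n. \<Sum>k. cmod (f n k * d k) * p m (e k)) \<longlonglongrightarrow> 0"
    unfolding a_def by (simp add: norm_mult mult.assoc)
  show "(\<lambda>n. p m (ser (\<lambda>k. f n k * d k) - 0)) \<longlonglongrightarrow> 0"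
    using nn_squeeze[OF p_nonneg ser_bound[OF ab] lim0] by simp
qed

lemma ser_diff_Tn:
  assumes ad: "abssum d"
  shows "(T ^^ n) (ser d) - ser d = ser (\<lambda>k. (lam k ^ n - 1) * d k)"
proof -
  have ab: "abssum (\<lambda>k. (lam k ^ n - 1) * d k)"
  proof (rule abssum_le[OF ad, of _ 2])
    fix k
    have "cmod (lam k ^ n - 1) \<le> cmod (lam k ^ n) + cmod 1" by (rule norm_triangle_ineq4)
    then have "cmod (lam k ^ n - 1) \<le> 2" by (simp add: norm_power unim)
    then show "cmod ((lam k ^ n - 1) * d k) \<le> 2 * cmod (d k)"
      by (simp add: norm_mult mult_right_mono)
  qed
  have "ser (\<lambda>k. (lam k ^ n - 1) * d k + d k) = ser (\<lambda>k. (lam k ^ n - 1) * d k) + ser d"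
    by (rule ser_add[OF ab ad])
  moreover have "(\<lambda>k. (lam k ^ n - 1) * d k + d k) = (\<lambda>k. lam k ^ n * d k)"
    by (simp add: algebra_simps)
  ultimately show ?thesis using ser_Tn[OF ad, of n] by simp
qed

lemma norm_lam_pow_minus1: "cmod (lam k ^ n - 1) \<le> 2"
proof -
  have "cmod (lam k ^ n - 1) \<le> cmod (lam k ^ n) + cmod 1" by (rule norm_triangle_ineq4)
  then show ?thesis by (simp add: norm_power unim)
qed

lemma rec_ser:
  assumes ad: "abssum d" and lim: "\<And>k. (\<lambda>n. lam k ^ \<omega> n) \<longlonglongrightarrow> 1"
  shows "rec_seq p T \<omega> (ser d)"
proof -
  have "sn_conv p (\<lambda>n. ser (\<lambda>k. (lam k ^ \<omega> n - 1) * d k)) 0"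
  proof (rule ser_null[OF ad, of _ 2])
    fix k
    show "(\<lambda>n. lam k ^ \<omega> n - 1) \<longlonglongrightarrow> 0" using lim[of k] by (rule LIM_zero)
  qed (rule norm_lam_pow_minus1)
  then show ?thesis
    unfolding rec_seq_def conv_iff0[of _ "ser d"] by (simp add: ser_diff_Tn[OF ad])
qed

lemma e_Lset:
  assumes lim: "(\<lambda>n. lam k ^ \<omega> n) \<longlonglongrightarrow> 1"
  shows "e k \<in> Lset p T \<omega>"
  unfolding Lset_def rec_seq_def sn_conv_def
proof (intro CollectI allI)
  fix m
  have eq: "(T ^^ \<omega> n) (e k) - e k = sc (lam k ^ \<omega> n - 1) (e k)" for n
    by (simp add: Tn_e scale_left_diff_distrib)
  have "(\<lambda>n. lam k ^ \<omega> n - 1) \<longlonglongrightarrow> 0" using lim by (rule LIM_zero)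
  then have "(\<lambda>n. cmod (lam k ^ \<omega> n - 1)) \<longlonglongrightarrow> 0" by (rule tendsto_norm_zero)
  then have "(\<lambda>n. cmod (lam k ^ \<omega> n - 1) * p m (e k)) \<longlonglongrightarrow> 0" by (rule tendsto_mult_left_zero)
  then show "(\<lambda>n. p m ((T ^^ \<omega> n) (e k) - e k)) \<longlonglongrightarrow> 0"
    by (simp add: eq p_scale)
qed

lemma closure_mono: "A \<subseteq> B \<Longrightarrow> sn_closure p A \<subseteq> sn_closure p B"
  unfolding sn_closure_def by blast

lemma Lset_dense:
  assumes lim: "\<And>k. (\<lambda>n. lam k ^ \<omega> n) \<longlonglongrightarrow> 1"
  shows "sn_dense p (Lset p T \<omega>)"
proof -
  have "span (range e) \<subseteq> Lset p T \<omega>"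
    by (rule span_minimal[OF _ Lset_subspace]) (use e_Lset[OF lim] in blast)
  then show ?thesis
    using closure_mono dspan unfolding sn_dense_def by blast
qed


lemma subseq_conv: "\<exists>r. strict_mono r \<and> (\<forall>k<K. convergent (\<lambda>n. lam k ^ r n))"
proof (induction K)
  case 0
  show ?case by (rule exI[of _ id]) (simp add: strict_mono_def)
next
  case (Suc K)
  then obtain r where r: "strict_mono r" "\<And>k. k < K \<Longrightarrow> convergent (\<lambda>n. lam k ^ r n)" by blast
  have "bounded (range (\<lambda>n. lam K ^ r n))"
    unfolding bounded_iff by (intro exI[of _ 1]) (auto simp: norm_power unim)
  then obtain l s where s: "strict_mono s" "((\<lambda>n. lam K ^ r n) \<circ> s) \<longlonglongrightarrow> l"
    using bounded_imp_convergent_subsequence by blast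
  have "convergent (\<lambda>n. lam k ^ (r \<circ> s) n)" if "k < Suc K" for k
  proof (cases "k = K")
    case True
    then show ?thesis using s(2) unfolding convergent_def o_def by blast
  next
    case False
    then have "convergent ((\<lambda>n. lam k ^ r n) \<circ> s)"
      using that r(2)[of k] s(1) by (intro convergent_subseq_convergent) auto
    then show ?thesis by (simp add: o_def)
  qed
  then show ?case using strict_mono_o[OF r(1) s(1)] by blast
qed

lemma approx:
  assumes "\<epsilon> > 0"
  shows "\<exists>m > B. \<forall>k<K. cmod (lam k ^ m - 1) < \<epsilon>"
proof -
  obtain r where r: "strict_mono r" "\<And>k. k < K \<Longrightarrow> convergent (\<lambda>n. lam k ^ r n)"
    using subseq_conv by blast
  have "\<forall>\<^sub>F a in sequentially. \<forall>k\<in>{..<K}. \<forall>b\<ge>a. dist (lam k ^ r a) (lam k ^ r b) < \<epsilon>"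
  proof (rule eventually_ball_finite)
    show "finite {..<K}" by simp
  next
    show "\<forall>k\<in>{..<K}. \<forall>\<^sub>F a in sequentially. \<forall>b\<ge>a. dist (lam k ^ r a) (lam k ^ r b) < \<epsilon>"
    proof
      fix k assume "k \<in> {..<K}"
      then have "Cauchy (\<lambda>n. lam k ^ r n)" using r(2) by (intro convergent_Cauchy) auto
      then obtain M where M: "\<And>a b. a \<ge> M \<Longrightarrow> b \<ge> M \<Longrightarrow> dist (lam k ^ r a) (lam k ^ r b) < \<epsilon>"
        using metric_CauchyD[OF _ assms] by blast
      show "\<forall>\<^sub>F a in sequentially. \<forall>b\<ge>a. dist (lam k ^ r a) (lam k ^ r b) < \<epsilon>"
        using eventually_ge_at_top[of M] by (rule eventually_mono) (use M in auto)
    qed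
  qed
  then obtain a where a: "\<And>k b. k < K \<Longrightarrow> b \<ge> a \<Longrightarrow> dist (lam k ^ r a) (lam k ^ r b) < \<epsilon>"
    unfolding eventually_sequentially by blast
  define b where "b = max a (r a + B + 1)"
  have "b \<ge> a" unfolding b_def by simp
  have "r b \<ge> b" using r(1) by (rule seq_suble)
  then have rb: "r b > r a + B" unfolding b_def by simp
  define m where "m = r b - r a"
  have "m > B" using rb unfolding m_def by simp
  moreover have "cmod (lam k ^ m - 1) < \<epsilon>" if "k < K" for k
  proof -
    have "lam k ^ r b = lam k ^ r a * lam k ^ m"
      unfolding m_def using rb by (simp flip: power_add)
    then have "lam k ^ r b - lam k ^ r a = lam k ^ r a * (lam k ^ m - 1)"
      by (simp add: algebra_simps)
    then have "cmod (lam k ^ r b - lam k ^ r a) = cmod (lam k ^ m - 1)"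
      by (simp add: norm_mult norm_power unim)
    then have "cmod (lam k ^ m - 1) = cmod (lam k ^ r a - lam k ^ r b)"
      by (simp add: norm_minus_commute[of "lam k ^ r a"])
    then show ?thesis using a[OF that \<open>b \<ge> a\<close>] by (simp add: dist_norm)
  qed
  ultimately show ?thesis by blast
qed

definition nxt :: "nat \<Rightarrow> nat \<Rightarrow> nat" where
  "nxt n b = (SOME m. m > b \<and> (\<forall>k<n. cmod (lam k ^ m - 1) < inverse (real (Suc n))))"

lemma nxt: "nxt n b > b" "k < n \<Longrightarrow> cmod (lam k ^ nxt n b - 1) < inverse (real (Suc n))"
proof -
  have "\<exists>m > b. \<forall>k<n. cmod (lam k ^ m - 1) < inverse (real (Suc n))"
    by (rule approx) simp
  then have "nxt n b > b \<and> (\<forall>k<n. cmod (lam k ^ nxt n b - 1) < inverse (real (Suc n)))"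
    unfolding nxt_def by (rule someI_ex)
  then show "nxt n b > b" "k < n \<Longrightarrow> cmod (lam k ^ nxt n b - 1) < inverse (real (Suc n))"
    by auto
qed

primrec om :: "nat \<Rightarrow> nat" where
  "om 0 = nxt 0 0"
| "om (Suc n) = nxt (Suc n) (om n)"

lemma om_adm: "admissible_seq om"
proof -
  have sm: "strict_mono om" unfolding strict_mono_Suc_iff by (simp add: nxt(1))
  have "0 < om n" for n
  proof (cases n)
    case 0 then show ?thesis using nxt(1)[of 0 0] by simp
  next
    case (Suc n') then show ?thesis using nxt(1)[where n="Suc n'" and b="om n'"] by simp
  qed
  then show ?thesis using sm unfolding admissible_seq_def by blast
qed

lemma om_lim: "(\<lambda>n. lam k ^ om n) \<longlonglongrightarrow> 1"
proof -
  have "(\<lambda>n. lam k ^ om n - 1) \<longlonglongrightarrow> 0"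
  proof (rule Lim_null_comparison[OF _ LIMSEQ_inverse_real_of_nat])
    have "cmod (lam k ^ om n - 1) \<le> inverse (real (Suc n))" if "n \<ge> Suc k" for n
    proof (cases n)
      case 0 then show ?thesis using that by simp
    next
      case (Suc n')
      then have "k < Suc n'" using that by simp
      then show ?thesis using nxt(2)[of k "Suc n'" "om n'"] Suc by simp
    qed
    then show "\<forall>\<^sub>F n in sequentially. norm (lam k ^ om n - 1) \<le> inverse (real (Suc n))"
      unfolding eventually_sequentially by blast
  qed
  then show ?thesis by (rule LIM_zero_cancel)
qed

lemma Rec_ser: "abssum d \<Longrightarrow> ser d \<in> Rec p T"
  unfolding Rec_def using om_adm rec_ser[OF _ om_lim] by blast


definition avg :: "nat \<Rightarrow> complex \<Rightarrow> complex" where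
  "avg N \<mu> = (\<Sum>m<N. \<mu> ^ m) / of_nat N"

lemma avg_1: "N > 0 \<Longrightarrow> avg N 1 = 1"
  unfolding avg_def by simp

lemma avg_bound:
  assumes "cmod \<mu> = 1" shows "cmod (avg N \<mu>) \<le> 1"
proof (cases "N = 0")
  case True then show ?thesis by (simp add: avg_def)
next
  case False
  have "cmod (\<Sum>m<N. \<mu> ^ m) \<le> (\<Sum>m<N. cmod (\<mu> ^ m))" by (rule norm_sum)
  also have "\<dots> = real N" by (simp add: norm_power assms)
  finally show ?thesis using False by (simp add: avg_def norm_divide)
qed

lemma avg_lim:
  assumes "cmod \<mu> = 1" "\<mu> \<noteq> 1" shows "(\<lambda>N. avg N \<mu>) \<longlonglongrightarrow> 0"
proof -
  have bnd: "cmod (avg N \<mu>) \<le> (2 / cmod (1 - \<mu>)) * inverse (real N)" for N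
  proof -
    have "cmod (1 - \<mu> ^ N) \<le> cmod (1::complex) + cmod (\<mu> ^ N)" by (rule norm_triangle_ineq4)
    then have "cmod (1 - \<mu> ^ N) \<le> 2" by (simp add: norm_power assms)
    then have "cmod (\<Sum>m<N. \<mu> ^ m) \<le> 2 / cmod (1 - \<mu>)"
      using assms(2) by (simp add: sum_gp_strict norm_divide divide_right_mono)
    then have "cmod (\<Sum>m<N. \<mu> ^ m) * inverse (real N) \<le> 2 / cmod (1 - \<mu>) * inverse (real N)"
      by (rule mult_right_mono) simp
    then show ?thesis
      by (simp add: avg_def norm_divide divide_inverse norm_mult norm_inverse)
  qed
  have lim: "(\<lambda>N. (2 / cmod (1 - \<mu>)) * inverse (real N)) \<longlonglongrightarrow> 0"
    by (rule tendsto_mult_right_zero) (rule lim_inverse_n)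
  have ev: "\<forall>\<^sub>F N in sequentially. norm (avg N \<mu>) \<le> (2 / cmod (1 - \<mu>)) * inverse (real N)"
    using bnd by (intro always_eventually) simp
  show ?thesis by (rule Lim_null_comparison[OF ev lim])
qed

definition restr :: "complex \<Rightarrow> (nat \<Rightarrow> complex) \<Rightarrow> nat \<Rightarrow> complex" where
  "restr lm d k = (if lam k = lm then d k else 0)"

lemma abssum_restr: "abssum d \<Longrightarrow> abssum (restr lm d)"
  by (rule abssum_le[of d _ 1]) (simp_all add: restr_def)

lemma ser_zero: "ser (\<lambda>k. 0) = 0" and abssum_zero: "abssum (\<lambda>k. 0)"
  using ser_fin[of 0 "\<lambda>k. 0"] by (simp_all add: psum_def)

lemma ser_sum:
  assumes "finite A" "\<And>i. i \<in> A \<Longrightarrow> abssum (f i)"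
  shows "abssum (\<lambda>k. \<Sum>i\<in>A. f i k) \<and> ser (\<lambda>k. \<Sum>i\<in>A. f i k) = (\<Sum>i\<in>A. ser (f i))"
  using assms
proof (induction A rule: finite_induct)
  case empty
  then show ?case by (simp add: ser_zero abssum_zero)
next
  case (insert x F)
  then have IH: "abssum (\<lambda>k. \<Sum>i\<in>F. f i k)" "ser (\<lambda>k. \<Sum>i\<in>F. f i k) = (\<Sum>i\<in>F. ser (f i))"
    by auto
  have fx: "abssum (f x)" using insert by auto
  show ?case
    using insert.hyps ser_add[OF fx IH(1)] IH(2) abssum_add[OF fx IH(1)] by simp
qed

lemma ser_diff:
  assumes "abssum d1" "abssum d2"
  shows "ser (\<lambda>k. d1 k - d2 k) = ser d1 - ser d2"
proof -
  have "ser (\<lambda>k. d1 k + (-1) * d2 k) = ser d1 + ser (\<lambda>k. (-1) * d2 k)"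
    by (rule ser_add[OF assms(1) abssum_scale[OF assms(2)]])
  then show ?thesis using ser_scale[OF assms(2), of "-1"] by simp
qed

definition Av :: "complex \<Rightarrow> nat \<Rightarrow> 'a \<Rightarrow> 'a" where
  "Av lm N v = (\<Sum>m<N. sc (cnj lm ^ m / of_nat N) ((T ^^ m) v))"

lemma Av_ser:
  assumes ad: "abssum d"
  shows "Av lm N (ser d) = ser (\<lambda>k. avg N (cnj lm * lam k) * d k)"
proof -
  have ab: "abssum (\<lambda>k. cnj lm ^ m / of_nat N * (lam k ^ m * d k))" for m
    by (rule abssum_scale, rule abssum_le[OF ad, of _ 1]) (simp add: norm_mult norm_power unim)
  have "Av lm N (ser d) = (\<Sum>m<N. ser (\<lambda>k. cnj lm ^ m / of_nat N * (lam k ^ m * d k)))"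
    unfolding Av_def
  proof (rule sum.cong[OF refl])
    fix m
    have "abssum (\<lambda>k. lam k ^ m * d k)"
      by (rule abssum_le[OF ad, of _ 1]) (simp add: norm_mult norm_power unim)
    then show "sc (cnj lm ^ m / of_nat N) ((T ^^ m) (ser d)) = ser (\<lambda>k. cnj lm ^ m / of_nat N * (lam k ^ m * d k))"
      by (simp only: ser_Tn[OF ad] ser_scale)
  qed
  also have "\<dots> = ser (\<lambda>k. \<Sum>m<N. cnj lm ^ m / of_nat N * (lam k ^ m * d k))"
    using ser_sum[of "{..<N}" "\<lambda>m k. cnj lm ^ m / of_nat N * (lam k ^ m * d k)"] ab by simp
  also have "(\<lambda>k. \<Sum>m<N. cnj lm ^ m / of_nat N * (lam k ^ m * d k)) = (\<lambda>k. avg N (cnj lm * lam k) * d k)"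
    unfolding avg_def
    by (simp add: power_mult_distrib sum_divide_distrib sum_distrib_right mult.assoc)
  finally show ?thesis .
qed

lemma Av_cont:
  assumes "sn_conv p s 0"
  shows "sn_conv p (\<lambda>n. Av lm N (s n)) 0"
proof -
  have gen: "sn_conv p (\<lambda>n. \<Sum>m<M. sc (c m) ((T ^^ m) (s n))) 0" for M and c :: "nat \<Rightarrow> complex"
  proof (induction M)
    case 0 then show ?case by (simp add: conv_const)
  next
    case (Suc M)
    have "sn_conv p (\<lambda>n. sc (c M) ((T ^^ M) (s n))) (sc (c M) ((T ^^ M) 0))"
      by (rule conv_scale[OF Tn_cont[OF assms]])
    then show ?case using conv_add[OF Suc.IH] by fastforce
  qed
  show ?thesis unfolding Av_def using gen[where M=N and c="\<lambda>m. cnj lm ^ m / of_nat N"] by simp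
qed


lemma p_le_diff: "p k u \<le> p k v + p k (v - u)"
  using p_add[of k v "u - v"] p_commute[of k u v] by simp

lemma cnj_unim: "cmod z = 1 \<Longrightarrow> cnj z * z = 1"
  using complex_norm_square[of z] by (simp add: mult.commute)

lemma lam_lim:
  assumes ad: "abssum d" and rs: "rec_seq p T \<omega> (ser d)"
    and Snz: "ser (restr lm d) \<noteq> 0" and lmj: "lm = lam j"
  shows "(\<lambda>n. lm ^ \<omega> n) \<longlonglongrightarrow> 1"
proof -
  define S where "S = ser (restr lm d)"
  have "\<exists>m0. p m0 S > 0"
  proof (rule ccontr)
    assume "\<not> ?thesis"
    then have "\<forall>k. p k S = 0" using p_nonneg[of _ S] by (meson antisym not_le)
    then have "S = 0" by (rule sep)
    then show False using Snz unfolding S_def by simp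
  qed
  then obtain m0 where P: "p m0 S > 0" by blast
  define D where "D n k = (lam k ^ \<omega> n - 1) * d k" for n k
  define y where "y n = ser (D n)" for n
  have abD: "abssum (D n)" for n
    unfolding D_def by (rule abssum_le[OF ad, of _ 2]) (simp add: norm_mult mult_right_mono norm_lam_pow_minus1)
  have yconv: "sn_conv p y 0"
  proof -
    have "sn_conv p (\<lambda>n. (T ^^ \<omega> n) (ser d) - ser d) 0"
      using rs unfolding rec_seq_def conv_iff0[of _ "ser d"] .
    then show ?thesis unfolding y_def D_def by (simp add: ser_diff_Tn[OF ad])
  qed
  define h where "h N k = cmod (avg N (cnj lm * lam k) - (if lam k = lm then 1 else 0))" for N k
  have h_le: "h N k \<le> 2" for N k
  proof -
    have "h N k \<le> cmod (avg N (cnj lm * lam k)) + cmod (if lam k = lm then 1 else 0::complex)"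
      unfolding h_def by (rule norm_triangle_ineq4)
    moreover have "cmod (avg N (cnj lm * lam k)) \<le> 1"
      by (rule avg_bound) (simp add: norm_mult unim lmj)
    ultimately show ?thesis by (simp split: if_splits)
  qed
  have h_nn: "h N k \<ge> 0" for N k unfolding h_def by simp
  define coef where "coef N n k = avg N (cnj lm * lam k) * D n k - (lm ^ \<omega> n - 1) * restr lm d k" for N n k
  have coef_eq: "coef N n k = (lam k ^ \<omega> n - 1) * d k * (avg N (cnj lm * lam k) - (if lam k = lm then 1 else 0))"
    if "N > 0" for N n k
  proof (cases "lam k = lm")
    case True
    then have "cnj lm * lam k = 1" using cnj_unim[of lm] unim[of j] lmj by simp
    then show ?thesis using True that unfolding coef_def D_def restr_def by (simp add: avg_1)
  next
    case False
    then show ?thesis unfolding coef_def D_def restr_def by simp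
  qed
  have coef_le: "cmod (coef N n k) \<le> 2 * h N k * cmod (d k)" if "N > 0" for N n k
  proof -
    have "cmod (coef N n k) = cmod (lam k ^ \<omega> n - 1) * cmod (d k) * h N k"
      unfolding coef_eq[OF that] h_def by (simp add: norm_mult)
    also have "\<dots> \<le> 2 * cmod (d k) * h N k"
      by (intro mult_right_mono norm_lam_pow_minus1 h_nn) simp
    finally show ?thesis by (simp add: mult_ac)
  qed
  have Av_eq: "Av lm N (y n) - sc (lm ^ \<omega> n - 1) S = ser (coef N n)" and abcoef: "abssum (coef N n)"
    if "N > 0" for N n
  proof -
    have ab1: "abssum (\<lambda>k. avg N (cnj lm * lam k) * D n k)"
    proof (rule abssum_le[OF abD[of n], of _ 1])
      fix k
      have "cmod (avg N (cnj lm * lam k)) \<le> 1"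
        by (rule avg_bound) (simp add: norm_mult unim lmj)
      then show "cmod (avg N (cnj lm * lam k) * D n k) \<le> 1 * cmod (D n k)"
        unfolding norm_mult by (rule mult_right_mono) simp
    qed
    have ab2: "abssum (\<lambda>k. (lm ^ \<omega> n - 1) * restr lm d k)"
      by (rule abssum_scale[OF abssum_restr[OF ad]])
    have "Av lm N (y n) - sc (lm ^ \<omega> n - 1) S
        = ser (\<lambda>k. avg N (cnj lm * lam k) * D n k) - ser (\<lambda>k. (lm ^ \<omega> n - 1) * restr lm d k)"
      unfolding y_def S_def Av_ser[OF abD] ser_scale[OF abssum_restr[OF ad]] ..
    also have "\<dots> = ser (coef N n)"
      unfolding coef_def by (rule ser_diff[OF ab1 ab2, symmetric])
    finally show "Av lm N (y n) - sc (lm ^ \<omega> n - 1) S = ser (coef N n)" .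
    show "abssum (coef N n)"
    proof (rule abssum_le[OF ad, of _ 4])
      fix k
      have "2 * h N k * cmod (d k) \<le> 4 * cmod (d k)"
        using h_le[of N k] by (intro mult_right_mono) auto
      then show "cmod (coef N n k) \<le> 4 * cmod (d k)" using coef_le[OF that, of n k] by linarith
    qed
  qed
  define \<delta> where "\<delta> N = (\<Sum>k. 2 * h N k * (cmod (d k) * p m0 (e k)))" for N
  have sm: "summable (\<lambda>k. cmod (d k) * p m0 (e k))" using ad unfolding abssum_def by blast
  have smh: "summable (\<lambda>k. 2 * h N k * (cmod (d k) * p m0 (e k)))" for N
  proof (rule summable_comparison_test'[of "\<lambda>k. 4 * (cmod (d k) * p m0 (e k))" 0])
    show "summable (\<lambda>k. 4 * (cmod (d k) * p m0 (e k)))" using sm by (rule summable_mult)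
  next
    fix k
    have "2 * h N k * (cmod (d k) * p m0 (e k)) \<le> 4 * (cmod (d k) * p m0 (e k))"
      using h_le[of N k] by (intro mult_right_mono) (auto simp: p_nonneg)
    then show "norm (2 * h N k * (cmod (d k) * p m0 (e k))) \<le> 4 * (cmod (d k) * p m0 (e k))"
      using h_nn[of N k] by (simp add: p_nonneg)
  qed
  have bound: "p m0 (Av lm N (y n) - sc (lm ^ \<omega> n - 1) S) \<le> \<delta> N" if "N > 0" for N n
  proof -
    have "p m0 (Av lm N (y n) - sc (lm ^ \<omega> n - 1) S) \<le> (\<Sum>k. cmod (coef N n k) * p m0 (e k))"
      unfolding Av_eq[OF that] by (rule ser_bound[OF abcoef[OF that]])
    also have "\<dots> \<le> \<delta> N"
      unfolding \<delta>_def
    proof (rule suminf_le)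
      fix k
      show "cmod (coef N n k) * p m0 (e k) \<le> 2 * h N k * (cmod (d k) * p m0 (e k))"
        using mult_right_mono[OF coef_le[OF that, of n k] p_nonneg[of m0 "e k"]] by (simp add: mult_ac)
    next
      show "summable (\<lambda>k. cmod (coef N n k) * p m0 (e k))"
        using abcoef[OF that] unfolding abssum_def by blast
    qed (rule smh)
    finally show ?thesis .
  qed
  have \<delta>lim: "\<delta> \<longlonglongrightarrow> 0"
  proof -
    have "(\<lambda>N. suminf (\<lambda>k. 2 * h N k * (cmod (d k) * p m0 (e k)))) \<longlonglongrightarrow> suminf (\<lambda>k. 0::real)"
    proof (rule conjunct2[OF conjunct2[OF tannerys_theorem[where M="\<lambda>k. 4 * (cmod (d k) * p m0 (e k))"]]])
      fix k
      have "(\<lambda>N. h N k) \<longlonglongrightarrow> 0"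
      proof (cases "lam k = lm")
        case True
        then have "cnj lm * lam k = 1" using cnj_unim[of lm] unim[of j] lmj by simp
        have "eventually (\<lambda>N. h N k = 0) sequentially"
          using eventually_ge_at_top[of 1]
        proof (rule eventually_mono)
          fix N :: nat assume "1 \<le> N"
          then show "h N k = 0" using \<open>cnj lm * lam k = 1\<close> by (simp add: h_def True avg_1)
        qed
        then show ?thesis by (rule tendsto_eventually)
      next
        case False
        have u: "cmod (cnj lm * lam k) = 1" by (simp add: norm_mult unim lmj)
        have "cnj lm * lam k \<noteq> 1"
        proof
          assume c: "cnj lm * lam k = 1"
          have l1: "lm * cnj lm = 1" using cnj_unim[of lm] unim[of j] lmj by (simp add: mult.commute)
          have "lam k = (lm * cnj lm) * lam k" using l1 by simp
          also have "\<dots> = lm * (cnj lm * lam k)" by (simp only: mult.assoc)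
          also have "\<dots> = lm" using c by simp
          finally show False using False by simp
        qed
        then have "(\<lambda>N. avg N (cnj lm * lam k)) \<longlonglongrightarrow> 0" by (rule avg_lim[OF u])
        then have "(\<lambda>N. cmod (avg N (cnj lm * lam k))) \<longlonglongrightarrow> 0" by (rule tendsto_norm_zero)
        then show ?thesis unfolding h_def using False by simp
      qed
      then have "(\<lambda>N. 2 * h N k) \<longlonglongrightarrow> 0" by (rule tendsto_mult_right_zero)
      then show "(\<lambda>N. 2 * h N k * (cmod (d k) * p m0 (e k))) \<longlonglongrightarrow> 0" by (rule tendsto_mult_left_zero)
    next
      have "norm (2 * h N k * (cmod (d k) * p m0 (e k))) \<le> 4 * (cmod (d k) * p m0 (e k))" for k N
      proof -
        have "2 * h N k * (cmod (d k) * p m0 (e k)) \<le> 4 * (cmod (d k) * p m0 (e k))"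
          using h_le[of N k] by (intro mult_right_mono) (auto simp: p_nonneg)
        then show ?thesis using h_nn[of N k] by (simp add: p_nonneg)
      qed
      then show "\<forall>\<^sub>F (k, N) in sequentially \<times>\<^sub>F sequentially. norm (2 * h N k * (cmod (d k) * p m0 (e k))) \<le> 4 * (cmod (d k) * p m0 (e k))"
        by (intro always_eventually) auto
    next
      show "summable (\<lambda>k. 4 * (cmod (d k) * p m0 (e k)))" using sm by (rule summable_mult)
    qed simp
    then show ?thesis unfolding \<delta>_def by simp
  qed
  have "(\<lambda>n. lm ^ \<omega> n) \<longlonglongrightarrow> 1"
    unfolding tendsto_iff
  proof (intro allI impI)
    fix \<epsilon> :: real assume "\<epsilon> > 0"
    define r where "r = \<epsilon> * p m0 S / 2"
    have "r > 0" unfolding r_def using \<open>\<epsilon> > 0\<close> P by simp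
    have "\<forall>\<^sub>F N in sequentially. \<delta> N < r \<and> N \<ge> 1"
      using order_tendstoD(2)[OF \<delta>lim \<open>r > 0\<close>] eventually_ge_at_top[of 1] by (rule eventually_conj)
    then obtain N where N: "\<delta> N < r" "N \<ge> 1" unfolding eventually_sequentially by blast
    have "sn_conv p (\<lambda>n. Av lm N (y n)) 0" by (rule Av_cont[OF yconv])
    then have "(\<lambda>n. p m0 (Av lm N (y n) - 0)) \<longlonglongrightarrow> 0" unfolding sn_conv_def by blast
    then have "\<forall>\<^sub>F n in sequentially. p m0 (Av lm N (y n)) < r"
      using order_tendstoD(2)[OF _ \<open>r > 0\<close>] by simp
    then show "\<forall>\<^sub>F n in sequentially. dist (lm ^ \<omega> n) 1 < \<epsilon>"
    proof (rule eventually_mono)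
      fix n assume n: "p m0 (Av lm N (y n)) < r"
      have "cmod (lm ^ \<omega> n - 1) * p m0 S = p m0 (sc (lm ^ \<omega> n - 1) S)" by (simp add: p_scale)
      also have "\<dots> \<le> p m0 (Av lm N (y n)) + p m0 (Av lm N (y n) - sc (lm ^ \<omega> n - 1) S)"
        by (rule p_le_diff)
      also have "\<dots> < r + r" using n bound[of N n] N by simp
      also have "\<dots> = \<epsilon> * p m0 S" unfolding r_def by simp
      finally have "cmod (lm ^ \<omega> n - 1) < \<epsilon>" using P by simp
      then show "dist (lm ^ \<omega> n) 1 < \<epsilon>" by (simp add: dist_norm)
    qed
  qed
  then show ?thesis .
qed

lemma Hr_ser:
  assumes ad: "abssum d" and nz0: "\<And>j. ser (restr (lam j) d) \<noteq> 0"
  shows "ser d \<in> Hr p T"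
  unfolding Hr_def
proof (intro CollectI conjI ballI impI)
  show "ser d \<in> Rec p T" by (rule Rec_ser[OF ad])
next
  fix \<omega> assume "\<omega> \<in> Cseqs p T" "ser d \<in> Lset p T \<omega>"
  then have rs: "rec_seq p T \<omega> (ser d)" unfolding Lset_def by simp
  show "sn_dense p (Lset p T \<omega>)"
    by (rule Lset_dense) (rule lam_lim[OF ad rs nz0 refl])
qed


lemma span_fin:
  assumes "v \<in> span (range e)"
  shows "\<exists>a N. (\<forall>k\<ge>N. a k = 0) \<and> v = ser a"
  using assms
proof (induction rule: span_induct)
  case (step x)
  then obtain j where j: "x = e j" by blast
  define a where "a k = (if k = j then 1 else (0::complex))" for k
  have fa: "\<forall>k\<ge>Suc j. a k = 0" unfolding a_def by simp
  have "ser a = psum a (Suc j)" using fa by (intro ser_fin) auto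
  also have "\<dots> = e j" unfolding psum_def a_def
    by (simp add: if_distrib[of "\<lambda>c. sc c _"] sum.delta cong: if_cong)
  finally show ?case using fa j by metis
next
  case base
  show "subspace {v. \<exists>a N. (\<forall>k\<ge>N. a k = 0) \<and> v = ser a}"
  proof (rule subspaceI)
    show "0 \<in> {v. \<exists>a N. (\<forall>k\<ge>N. a k = 0) \<and> v = ser a}"
      using ser_zero by force
  next
    fix x y assume "x \<in> {v. \<exists>a N. (\<forall>k\<ge>N. a k = 0) \<and> v = ser a}" "y \<in> {v. \<exists>a N. (\<forall>k\<ge>N. a k = 0) \<and> v = ser a}"
    then obtain a1 N1 a2 N2 where h: "\<forall>k\<ge>N1. a1 k = 0" "x = ser a1" "\<forall>k\<ge>N2. a2 k = 0" "y = ser a2" by blast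
    have "abssum a1" "abssum a2" using h ser_fin(1) by blast+
    then have "x + y = ser (\<lambda>k. a1 k + a2 k)" using h ser_add by simp
    moreover have "\<forall>k\<ge>max N1 N2. a1 k + a2 k = 0" using h by simp
    ultimately show "x + y \<in> {v. \<exists>a N. (\<forall>k\<ge>N. a k = 0) \<and> v = ser a}"
      by (intro CollectI exI[of _ "\<lambda>k. a1 k + a2 k"] exI[of _ "max N1 N2"]) simp
  next
    fix c x assume "x \<in> {v. \<exists>a N. (\<forall>k\<ge>N. a k = 0) \<and> v = ser a}"
    then obtain a1 N1 where h: "\<forall>k\<ge>N1. a1 k = 0" "x = ser a1" by blast
    have "abssum a1" using h ser_fin(1) by blast
    then have "sc c x = ser (\<lambda>k. c * a1 k)" using h ser_scale by simp
    moreover have "\<forall>k\<ge>N1. c * a1 k = 0" using h by simp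
    ultimately show "sc c x \<in> {v. \<exists>a N. (\<forall>k\<ge>N. a k = 0) \<and> v = ser a}"
      by (intro CollectI exI[of _ "\<lambda>k. c * a1 k"] exI[of _ N1]) simp
  qed
qed

definition eps :: "nat \<Rightarrow> real" where
  "eps k = inverse (2 ^ k * (1 + (\<Sum>j\<le>k. p j (e k))))"

definition cc :: "nat \<Rightarrow> complex" where
  "cc k = (if (\<forall>i<k. lam i \<noteq> lam k) then of_real (eps k) else 0)"

lemma eps_pos: "eps k > 0"
proof -
  have "(\<Sum>j\<le>k. p j (e k)) \<ge> 0" by (intro sum_nonneg) (simp add: p_nonneg)
  then show ?thesis unfolding eps_def by simp
qed

lemma abssum_cc: "abssum cc"
  unfolding abssum_def
proof
  fix m
  show "summable (\<lambda>k. cmod (cc k) * p m (e k))"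
  proof (rule summable_comparison_test'[of "\<lambda>k. (1/2) ^ k" m])
    show "summable (\<lambda>k. (1/2::real) ^ k)" by (rule summable_geometric) simp
  next
    fix k assume "m \<le> k"
    have S: "(\<Sum>j\<le>k. p j (e k)) \<ge> p m (e k)"
      using \<open>m \<le> k\<close> by (intro member_le_sum) (auto simp: p_nonneg)
    have "cmod (cc k) \<le> eps k" unfolding cc_def using eps_pos[of k] by simp
    then have "cmod (cc k) * p m (e k) \<le> eps k * p m (e k)"
      by (rule mult_right_mono) (simp add: p_nonneg)
    also have "\<dots> \<le> eps k * (1 + (\<Sum>j\<le>k. p j (e k)))"
      using S eps_pos[of k] by (intro mult_left_mono) auto
    also have "\<dots> = (1/2) ^ k"
    proof -
      have "1 + (\<Sum>j\<le>k. p j (e k)) > 0" using S p_nonneg[of m "e k"] by linarith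
      then have "(2::real) ^ k * (1 + (\<Sum>j\<le>k. p j (e k))) \<noteq> 0" by simp
      then show ?thesis unfolding eps_def
        by (simp add: power_one_over divide_simps del: mult_eq_0_iff)
    qed
    finally show "norm (cmod (cc k) * p m (e k)) \<le> (1/2) ^ k" by (simp add: p_nonneg)
  qed
qed

lemma cc_restr_nz: "ser (restr (lam j) cc) \<noteq> 0"
proof -
  define k0 where "k0 = (LEAST k. lam k = lam j)"
  have k0: "lam k0 = lam j" unfolding k0_def by (rule LeastI) (rule refl)
  have k0min: "i < k0 \<Longrightarrow> lam i \<noteq> lam j" for i unfolding k0_def using not_less_Least by blast
  have r: "restr (lam j) cc k = (if k = k0 then of_real (eps k0) else 0)" for k
  proof (cases "lam k = lam j")
    case True
    then have "k0 \<le> k" unfolding k0_def by (rule Least_le)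
    show ?thesis
    proof (cases "k = k0")
      case True then show ?thesis using k0 by (simp add: restr_def cc_def k0min)
    next
      case False
      then have "k0 < k" using \<open>k0 \<le> k\<close> by simp
      then have "\<not> (\<forall>i<k. lam i \<noteq> lam k)" using k0 True by auto
      then show ?thesis using False True unfolding restr_def cc_def by auto
    qed
  next
    case False
    then show ?thesis using k0 by (auto simp: restr_def)
  qed
  have fa: "\<forall>k\<ge>Suc k0. restr (lam j) cc k = 0" using r by simp
  have "ser (restr (lam j) cc) = psum (restr (lam j) cc) (Suc k0)" using fa by (intro ser_fin) auto
  also have "\<dots> = sc (of_real (eps k0)) (e k0)"
    unfolding psum_def r by (simp add: if_distrib[of "\<lambda>c. sc c _"] sum.delta cong: if_cong)
  finally show ?thesis using eps_pos[of k0] nz[of k0] by simp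
qed

lemma Hr_dense: "sn_dense p (Hr p T)"
  unfolding sn_dense_def
proof (rule set_eqI, rule iffI)
  fix x :: 'a assume "x \<in> UNIV"
  show "x \<in> sn_closure p (Hr p T)"
    unfolding sn_closure_def
  proof (intro CollectI allI impI)
    fix K :: "nat set" and \<epsilon> :: real assume Ke: "finite K \<and> \<epsilon> > 0"
    have "x \<in> sn_closure p (span (range e))" using dspan by simp
    then obtain z where z: "z \<in> span (range e)" "\<And>k. k \<in> K \<Longrightarrow> p k (z - x) < \<epsilon> / 2"
    proof -
      have "finite K \<and> \<epsilon> / 2 > 0" using Ke by simp
      then have "\<exists>y\<in>span (range e). \<forall>k\<in>K. p k (y - x) < \<epsilon> / 2"
        using \<open>x \<in> sn_closure p (span (range e))\<close> unfolding sn_closure_def by blast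
      then show ?thesis using that by blast
    qed
    obtain a N where a: "\<forall>k\<ge>N. a k = 0" "z = ser a" using span_fin[OF z(1)] by blast
    have aa: "abssum a" using a(1) ser_fin(1) by blast
    define W where "W j = ser (restr (lam j) cc)" for j
    define U where "U j = ser (restr (lam j) a)" for j
    define Bj where "Bj j = {t::real. U j + sc (of_real t) (W j) = 0}" for j
    define f where "f j = (SOME t. t \<in> Bj j)" for j
    have Bsub: "(\<Union>j. Bj j) \<subseteq> range f"
    proof
      fix t assume "t \<in> (\<Union>j. Bj j)"
      then obtain j where t: "t \<in> Bj j" by blast
      then have ft: "f j \<in> Bj j" unfolding f_def by (rule someI)
      have e1: "U j + sc (of_real t) (W j) = 0" using t unfolding Bj_def by simp
      have e2: "U j + sc (of_real (f j)) (W j) = 0" using ft unfolding Bj_def by simp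
      have "sc (of_real t - of_real (f j)) (W j) = (U j + sc (of_real t) (W j)) - (U j + sc (of_real (f j)) (W j))"
        by (simp add: scale_left_diff_distrib)
      then have "sc (of_real t - of_real (f j)) (W j) = 0" using e1 e2 by simp
      then have "t = f j" using cc_restr_nz[of j] unfolding W_def by simp
      then show "t \<in> range f" by blast
    qed
    have cB: "countable (\<Union>j. Bj j)" by (rule countable_subset[OF Bsub]) simp
    define S where "S = (\<Sum>k\<in>K. p k (ser cc))"
    have S0: "S \<ge> 0" unfolding S_def by (intro sum_nonneg) (simp add: p_nonneg)
    define \<delta> where "\<delta> = \<epsilon> / (2 * (1 + S))"
    have "\<delta> > 0" unfolding \<delta>_def using Ke S0 by simp
    then have "uncountable {0<..<\<delta>}" by (simp add: uncountable_open_interval)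
    then have "\<not> {0<..<\<delta>} \<subseteq> (\<Union>j. Bj j)" using cB countable_subset by blast
    then obtain t where t0: "t \<in> {0<..<\<delta>}" "t \<notin> (\<Union>j. Bj j)" by blast
    then have t: "0 < t" "t < \<delta>" "\<And>j. t \<notin> Bj j" by auto
    define dt where "dt k = a k + of_real t * cc k" for k
    have ab2: "abssum (\<lambda>k. of_real t * cc k)" by (rule abssum_scale[OF abssum_cc])
    have adt: "abssum dt" unfolding dt_def by (rule abssum_add[OF aa ab2])
    have ydef: "ser dt = z + sc (of_real t) (ser cc)"
      unfolding dt_def a(2) ser_add[OF aa ab2] ser_scale[OF abssum_cc] ..
    have "ser (restr (lam j) dt) \<noteq> 0" for j
    proof -
      have "restr (lam j) dt = (\<lambda>k. restr (lam j) a k + of_real t * restr (lam j) cc k)"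
        by (auto simp: restr_def dt_def)
      then have "ser (restr (lam j) dt) = U j + sc (of_real t) (W j)"
        unfolding U_def W_def
        using ser_add[OF abssum_restr[OF aa] abssum_scale[OF abssum_restr[OF abssum_cc]]]
          ser_scale[OF abssum_restr[OF abssum_cc]] by simp
      then show ?thesis using t(3)[of j] unfolding Bj_def by simp
    qed
    then have yH: "ser dt \<in> Hr p T" by (rule Hr_ser[OF adt])
    have "p k (ser dt - x) < \<epsilon>" if "k \<in> K" for k
    proof -
      have pk: "p k (ser cc) \<le> S" unfolding S_def using Ke that
        by (intro member_le_sum) (auto simp: p_nonneg)
      have "p k (ser dt - x) \<le> p k (ser dt - z) + p k (z - x)" by (rule p_diff_tri)
      also have "p k (ser dt - z) = t * p k (ser cc)" using t(1) by (simp add: ydef p_scale)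
      also have "t * p k (ser cc) \<le> t * (1 + S)" using pk t(1) by (intro mult_left_mono) auto
      also have "t * (1 + S) < \<delta> * (1 + S)" using t(2) S0 by (intro mult_strict_right_mono) auto
      also have "\<delta> * (1 + S) = \<epsilon> / 2" unfolding \<delta>_def using S0 by (simp add: field_simps)
      finally show ?thesis using z(2)[OF that] by linarith
    qed
    then show "\<exists>y\<in>Hr p T. \<forall>k\<in>K. p k (y - x) < \<epsilon>" using yH by blast
  qed
qed simp

end

context fr
begin

lemma finish:
  assumes d: "sn_dense p (Hr p T)"
  shows "hyper_recurrent p T \<and> sn_dense p (Hr p T)"
proof -
  have sub: "Hr p T \<subseteq> Rec p T" unfolding Hr_def by blast
  have "sn_closure p (Hr p T) \<subseteq> sn_closure p (Rec p T)"
    using sub unfolding sn_closure_def by blast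
  then have r: "recurrent_op p T" using d unfolding recurrent_op_def sn_dense_def by blast
  have "(0::'a) \<in> sn_closure p (Hr p T)" using d unfolding sn_dense_def by blast
  then have h: "\<forall>K e. finite K \<and> e > 0 \<longrightarrow> (\<exists>y\<in>Hr p T. \<forall>k\<in>K. p k (y - 0) < e)"
    unfolding sn_closure_def by simp
  have "\<exists>y\<in>Hr p T. \<forall>k\<in>({}::nat set). p k (y - 0) < (1::real)"
    using h[rule_format, of "{}" 1] by simp
  then have "Hr p T \<noteq> {}" by blast
  then show ?thesis using r d unfolding hyper_recurrent_def by blast
qed

lemma degenerate:
  assumes z: "\<And>x::'a. x = 0"
  shows "sn_dense p (Hr p T)"
proof -
  have adm: "admissible_seq Suc" unfolding admissible_seq_def by (simp add: strict_mono_Suc_iff)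
  have "rec_seq p T Suc 0" unfolding rec_seq_def Tn_zero by (rule conv_const)
  then have rec: "(0::'a) \<in> Rec p T" unfolding Rec_def using adm by blast
  have "Cseqs p T = {}" unfolding Cseqs_def using z by blast
  then have "(0::'a) \<in> Hr p T" using rec unfolding Hr_def by blast
  then have "x \<in> sn_closure p (Hr p T)" for x
    unfolding sn_closure_def
  proof (intro CollectI allI impI)
    fix K :: "nat set" and \<epsilon> :: real assume "finite K \<and> \<epsilon> > 0"
    moreover have "p k (0 - x) = 0" for k using z[of x] by simp
    ultimately have "\<forall>k\<in>K. p k (0 - x) < \<epsilon>" by simp
    then show "\<exists>y\<in>Hr p T. \<forall>k\<in>K. p k (y - x) < \<epsilon>"
      using \<open>0 \<in> Hr p T\<close> by (rule_tac bexI)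
  qed
  then show ?thesis unfolding sn_dense_def by blast
qed

end

theorem theorem5p12:
  fixes sc :: "complex \<Rightarrow> 'a::ab_group_add \<Rightarrow> 'a"
    and p :: "nat \<Rightarrow> 'a \<Rightarrow> real"
    and T :: "'a \<Rightarrow> 'a"
  assumes "complex_frechet sc p"
    and "sn_separable p"
    and "Vector_Spaces.linear sc sc T"
    and "sn_continuous p T"
    and "bij T"
    and "sn_continuous p (inv T)"
    and "sn_closure p (module.span sc (unimod_eigvecs sc T)) = UNIV"
  shows "hyper_recurrent p T \<and> sn_dense p (Hr p T)"
proof -
  have frf: "fr sc p T"
    using assms(1,3,4) unfolding complex_frechet_def fr_def fr_axioms_def by auto
  interpret F: fr sc p T by (rule frf)
  define E where "E = unimod_eigvecs sc T"
  obtain D where D: "countable D" "sn_closure p D = UNIV"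
    using assms(2) unfolding sn_separable_def sn_dense_def by blast
  have ex1: "\<exists>y. y \<in> F.span E \<and> (\<forall>k\<in>{..n}. p k (y - d) < inverse (real (Suc n)))" for d n
  proof -
    have "d \<in> sn_closure p (F.span E)" using assms(7) unfolding E_def by simp
    then have h: "\<forall>K e. finite K \<and> e > 0 \<longrightarrow> (\<exists>y\<in>F.span E. \<forall>k\<in>K. p k (y - d) < e)"
      unfolding sn_closure_def by simp
    have "\<exists>y\<in>F.span E. \<forall>k\<in>{..n}. p k (y - d) < inverse (real (Suc n))"
      using h[rule_format, of "{..n}" "inverse (real (Suc n))"] by simp
    then show ?thesis by blast
  qed
  have "\<forall>dn. \<exists>y. y \<in> F.span E \<and> (\<forall>k\<in>{..snd dn}. p k (y - fst dn) < inverse (real (Suc (snd dn))))"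
    by (intro allI) (rule ex1)
  from choice[OF this] obtain Y where Y: "\<forall>dn. Y dn \<in> F.span E \<and> (\<forall>k\<in>{..snd dn}. p k (Y dn - fst dn) < inverse (real (Suc (snd dn))))"
    by blast
  define y where "y d n = Y (d, n)" for d n
  have y: "\<And>d n. y d n \<in> F.span E" "\<And>d n k. k \<le> n \<Longrightarrow> p k (y d n - d) < inverse (real (Suc n))"
    unfolding y_def using Y by auto
  have "\<exists>t. finite t \<and> t \<subseteq> E \<and> y d n \<in> F.span t" for d n
  proof -
    obtain t r where tr: "y d n = (\<Sum>a\<in>t. sc (r a) a)" "finite t" "t \<subseteq> E"
      using y(1)[of d n] unfolding F.span_explicit by blast
    have "y d n \<in> F.span t" unfolding tr(1)
      by (intro F.span_sum F.span_scale F.span_base)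
    then show ?thesis using tr by blast
  qed
  then have "\<forall>dn. \<exists>t. finite t \<and> t \<subseteq> E \<and> y (fst dn) (snd dn) \<in> F.span t" by simp
  from choice[OF this] obtain TT where TT: "\<forall>dn. finite (TT dn) \<and> TT dn \<subseteq> E \<and> y (fst dn) (snd dn) \<in> F.span (TT dn)"
    by blast
  define tt where "tt d n = TT (d, n)" for d n
  have tt: "\<And>d n. finite (tt d n)" "\<And>d n. tt d n \<subseteq> E" "\<And>d n. y d n \<in> F.span (tt d n)"
    unfolding tt_def using TT by auto
  define F0 where "F0 = (\<Union>d\<in>D. \<Union>n. tt d n) - {0}"
  have c1: "countable (\<Union>n. tt d n)" for d
    by (rule countable_UN[OF countableI_type]) (rule countable_finite[OF tt(1)])
  have "countable (\<Union>d\<in>D. \<Union>n. tt d n)" by (rule countable_UN[OF D(1) c1])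
  then have cF0: "countable F0" unfolding F0_def by (rule countable_Diff)
  have F0E: "F0 \<subseteq> E - {0}" unfolding F0_def using tt(2) by blast
  have yF: "y d n \<in> F.span F0" if "d \<in> D" for d n
  proof -
    have "tt d n - {0} \<subseteq> F0" unfolding F0_def using that by blast
    then have "F.span (tt d n - {0}) \<subseteq> F.span F0" by (rule F.span_mono)
    then show ?thesis using tt(3)[of d n] F.span_delete_0[of "tt d n"] by blast
  qed
  have dense: "sn_closure p (F.span F0) = UNIV"
  proof (rule set_eqI, rule iffI)
    fix x :: 'a
    show "x \<in> sn_closure p (F.span F0)"
      unfolding sn_closure_def
    proof (intro CollectI allI impI)
      fix K :: "nat set" and \<epsilon> :: real assume Ke: "finite K \<and> \<epsilon> > 0"
      obtain n0 :: nat where n0: "2 / \<epsilon> < real n0" using reals_Archimedean2 by blast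
      obtain n1 where n1: "K \<subseteq> {..n1}" using Ke finite_nat_iff_bounded_le by blast
      define n where "n = max n0 n1"
      have Kn: "K \<subseteq> {..n}" using n1 unfolding n_def by auto
      have "2 / \<epsilon> < real (Suc n)" using n0 unfolding n_def by simp
      then have small: "2 * inverse (real (Suc n)) < \<epsilon>" using Ke
        by (simp add: field_simps)
      have "x \<in> sn_closure p D" using D(2) by simp
      then have h: "\<forall>K e. finite K \<and> e > 0 \<longrightarrow> (\<exists>y\<in>D. \<forall>k\<in>K. p k (y - x) < e)"
        unfolding sn_closure_def by simp
      have "\<exists>d\<in>D. \<forall>k\<in>{..n}. p k (d - x) < inverse (real (Suc n))"
        using h[rule_format, of "{..n}" "inverse (real (Suc n))"] by simp
      then obtain d where d: "d \<in> D" "\<forall>k\<in>{..n}. p k (d - x) < inverse (real (Suc n))"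
        by blast
      have "p k (y d n - x) < \<epsilon>" if "k \<in> K" for k
      proof -
        have kn: "k \<le> n" using Kn that by auto
        have "p k (y d n - x) \<le> p k (y d n - d) + p k (d - x)" by (rule F.p_diff_tri)
        also have "\<dots> < inverse (real (Suc n)) + inverse (real (Suc n))"
          using y(2)[OF kn, of d] d(2) kn by (intro add_strict_mono) auto
        finally show ?thesis using small by linarith
      qed
      then show "\<exists>y\<in>F.span F0. \<forall>k\<in>K. p k (y - x) < \<epsilon>" using yF[OF d(1)] by blast
    qed
  qed simp
  show ?thesis
  proof (cases "F0 = {}")
    case True
    have "x = 0" for x :: 'a
    proof -
      have "x \<in> sn_closure p {0}" using dense True by simp
      then have h: "\<forall>K e. finite K \<and> e > 0 \<longrightarrow> (\<exists>y\<in>{0}. \<forall>k\<in>K. p k (y - x) < e)"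
        unfolding sn_closure_def by simp
      have lt: "p k x < \<epsilon>" if "\<epsilon> > 0" for k \<epsilon>
        using h[rule_format, of "{k}" \<epsilon>] that by (simp add: F.p_minus)
      have "p k x \<le> 0" for k
      proof (rule ccontr)
        assume "\<not> p k x \<le> 0"
        then have "p k x > 0" by simp
        then show False using lt[of "p k x" k] by simp
      qed
      then have "\<forall>k. p k x = 0" using F.p_nonneg by (meson antisym)
      then show ?thesis by (rule F.sep)
    qed
    then show ?thesis by (intro F.finish F.degenerate)
  next
    case False
    define e where "e = from_nat_into F0"
    have re: "range e = F0" unfolding e_def using False cF0 by simp
    define lam where "lam k = (SOME c. cmod c = 1 \<and> T (e k) = sc c (e k))" for k
    have eE: "e k \<in> E - {0}" for k using re F0E by blast
    have lamk: "cmod (lam k) = 1 \<and> T (e k) = sc (lam k) (e k)" for k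
    proof -
      have "\<exists>c. cmod c = 1 \<and> T (e k) = sc c (e k)" using eE[of k] unfolding E_def unimod_eigvecs_def by blast
      then show ?thesis unfolding lam_def by (rule someI_ex)
    qed
    have "fr_e sc p T e lam"
    proof (rule fr_e.intro[OF frf], rule fr_e_axioms.intro)
      show "\<And>k. T (e k) = sc (lam k) (e k)" using lamk by blast
      show "\<And>k. cmod (lam k) = 1" using lamk by blast
      show "\<And>k. e k \<noteq> 0" using eE by blast
      show "sn_closure p (F.span (range e)) = UNIV" using dense re by simp
    qed
    then interpret G: fr_e sc p T e lam .
    show ?thesis by (rule F.finish[OF G.Hr_dense])
  qed
qed

end
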